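(* Suppose $G_1$ and $G_2$ are Polish groups, each of which is isomorphic (as a topological group) to a closed subgroup of the other. If $G_1$ has an $F_\sigma$ subgroup $H_1$ which is universal for $K_\sigma$ subgroups of $G_1$ (i.e., for every $K_\sigma$ subgroup $K\subseteq G_1$ there is a continuous homomorphism $\varphi:G_1\to G_1$ with $\varphi^{-1}(H_1)=K$), then $G_2$ has an $F_\sigma$ subgroup with the analogous property for $K_\sigma$ subgroups of $G_2$.
   Context: A $K_\sigma$ set is a countable union of compact sets; an $F_\sigma$ set is a countable union of closed sets. *)

theory Defs
  imports "HOL-Analysis.Analysis" "HOL-Algebra.Group"
begin

definition topological_group :: "'a monoid \<Rightarrow> 'a topology \<Rightarrow> bool" where
  "topological_group G T \<longleftrightarrow>
     group G \<and> topspace T = carrier G \<and>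
     continuous_map (prod_topology T T) T (\<lambda>(x, y). x \<otimes>\<^bsub>G\<^esub> y) \<and>
     continuous_map T T (\<lambda>x. inv\<^bsub>G\<^esub> x)"

definition Polish_space_top :: "'a topology \<Rightarrow> bool" where
  "Polish_space_top T \<longleftrightarrow> completely_metrizable_space T \<and> separable_space T"

definition Polish_group :: "'a monoid \<Rightarrow> 'a topology \<Rightarrow> bool" where
  "Polish_group G T \<longleftrightarrow> topological_group G T \<and> Polish_space_top T"

definition ksigma_in :: "'a topology \<Rightarrow> 'a set \<Rightarrow> bool" where
  "ksigma_in X \<equiv> countable union_of compactin X"

definition closed_subgroup_embedding ::
  "'a monoid \<Rightarrow> 'a topology \<Rightarrow> 'b monoid \<Rightarrow> 'b topology \<Rightarrow> ('a \<Rightarrow> 'b) \<Rightarrow> bool" where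
  "closed_subgroup_embedding G1 T1 G2 T2 f \<longleftrightarrow>
     f \<in> hom G1 G2 \<and> inj_on f (carrier G1) \<and>
     subgroup (f ` carrier G1) G2 \<and> closedin T2 (f ` carrier G1) \<and>
     homeomorphic_map T1 (subtopology T2 (f ` carrier G1)) f"

definition universal_Ksigma_subgroup :: "'a monoid \<Rightarrow> 'a topology \<Rightarrow> 'a set \<Rightarrow> bool" where
  "universal_Ksigma_subgroup G T H \<longleftrightarrow>
     subgroup H G \<and> fsigma_in T H \<and>
     (\<forall>K. subgroup K G \<and> ksigma_in T K \<longrightarrow>
        (\<exists>\<phi>. \<phi> \<in> hom G G \<and> continuous_map T T \<phi> \<and>
             {x \<in> carrier G. \<phi> x \<in> H} = K))"

end

theory Submission
  imports Defs
begin

lemma hom_cl: "h \<in> hom G H \<Longrightarrow> x \<in> carrier G \<Longrightarrow> h x \<in> carrier H"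
  unfolding hom_def by blast

lemma emb_cont:
  assumes "closed_subgroup_embedding G1 T1 G2 T2 f"
  shows "continuous_map T1 T2 f"
proof -
  have "continuous_map T1 (subtopology T2 (f ` carrier G1)) f"
    using assms homeomorphic_imp_continuous_map unfolding closed_subgroup_embedding_def by blast
  then show ?thesis using continuous_map_in_subtopology by blast
qed

theorem mainTheorem6:
  fixes G1 :: "'a monoid" and T1 :: "'a topology"
    and G2 :: "'b monoid" and T2 :: "'b topology"
  assumes "Polish_group G1 T1" and "Polish_group G2 T2"
    and "\<exists>f. closed_subgroup_embedding G1 T1 G2 T2 f"
    and "\<exists>g. closed_subgroup_embedding G2 T2 G1 T1 g"
    and "\<exists>H1. universal_Ksigma_subgroup G1 T1 H1"
  shows "\<exists>H2. universal_Ksigma_subgroup G2 T2 H2"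
proof -
  obtain f where f: "closed_subgroup_embedding G1 T1 G2 T2 f" using assms(3) by blast
  obtain g where g: "closed_subgroup_embedding G2 T2 G1 T1 g" using assms(4) by blast
  obtain H1 where H1: "universal_Ksigma_subgroup G1 T1 H1" using assms(5) by blast
  have grp1: "group G1" and grp2: "group G2" and top1: "topspace T1 = carrier G1"
    and top2: "topspace T2 = carrier G2"
    using assms(1,2) unfolding Polish_group_def topological_group_def by auto
  have fhom: "f \<in> hom G1 G2" and finj: "inj_on f (carrier G1)"
    and fcl: "closedin T2 (f ` carrier G1)"
    and fhm: "homeomorphic_map T1 (subtopology T2 (f ` carrier G1)) f"
    using f unfolding closed_subgroup_embedding_def by auto
  have ghom: "g \<in> hom G2 G1" and ginj: "inj_on g (carrier G2)"
    using g unfolding closed_subgroup_embedding_def by auto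
  have fc: "continuous_map T1 T2 f" using emb_cont[OF f] .
  have gc: "continuous_map T2 T1 g" using emb_cont[OF g] .
  have fgh: "group_hom G1 G2 f" using grp1 grp2 fhom unfolding group_hom_def group_hom_axioms_def by auto
  have ggh: "group_hom G2 G1 g" using grp1 grp2 ghom unfolding group_hom_def group_hom_axioms_def by auto
  have H1sub: "subgroup H1 G1" and H1fs: "fsigma_in T1 H1"
    and H1u: "\<And>K. subgroup K G1 \<Longrightarrow> ksigma_in T1 K \<Longrightarrow>
        (\<exists>\<phi>. \<phi> \<in> hom G1 G1 \<and> continuous_map T1 T1 \<phi> \<and> {x \<in> carrier G1. \<phi> x \<in> H1} = K)"
    using H1 unfolding universal_Ksigma_subgroup_def by auto
  have H1c: "H1 \<subseteq> carrier G1" using H1sub subgroup.subset by blast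
  define H2 where "H2 = f ` H1"
  have "subgroup H2 G2" unfolding H2_def using group_hom.subgroup_img_is_subgroup[OF fgh H1sub] .
  moreover have "fsigma_in T2 H2"
  proof -
    obtain U where U: "countable U" "\<forall>c\<in>U. closedin T1 c" "\<Union>U = H1"
      using H1fs unfolding fsigma_in_def union_of_def by blast
    have "\<forall>c\<in>U. closedin T2 (f ` c)"
    proof
      fix c assume "c \<in> U"
      then have cc: "closedin T1 c" using U by auto
      then have "c \<subseteq> topspace T1" by (rule closedin_subset)
      then have "closedin (subtopology T2 (f ` carrier G1)) (f ` c)"
        using homeomorphic_map_closedness[OF fhm] cc by blast
      then show "closedin T2 (f ` c)" using closedin_trans_full fcl by blast
    qed
    then show ?thesis unfolding fsigma_in_def union_of_def H2_def
      using U by (intro exI[of _ "(`) f ` U"]) auto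
  qed
  moreover have "\<forall>K. subgroup K G2 \<and> ksigma_in T2 K \<longrightarrow>
        (\<exists>\<psi>. \<psi> \<in> hom G2 G2 \<and> continuous_map T2 T2 \<psi> \<and>
             {x \<in> carrier G2. \<psi> x \<in> H2} = K)"
  proof (intro allI impI, elim conjE)
    fix K assume Ks: "subgroup K G2" and Kk: "ksigma_in T2 K"
    have Kc: "K \<subseteq> carrier G2" using Ks subgroup.subset by blast
    have gKs: "subgroup (g ` K) G1" using group_hom.subgroup_img_is_subgroup[OF ggh Ks] .
    have gKk: "ksigma_in T1 (g ` K)"
    proof -
      obtain U where U: "countable U" "\<forall>c\<in>U. compactin T2 c" "\<Union>U = K"
        using Kk unfolding ksigma_in_def union_of_def by blast
      have "\<forall>c\<in>U. compactin T1 (g ` c)" using U image_compactin gc by blast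
      then show ?thesis unfolding ksigma_in_def union_of_def
        using U by (intro exI[of _ "(`) g ` U"]) auto
    qed
    obtain \<phi> where phi: "\<phi> \<in> hom G1 G1" "continuous_map T1 T1 \<phi>"
      "{x \<in> carrier G1. \<phi> x \<in> H1} = g ` K"
      using H1u[OF gKs gKk] by blast
    define \<psi> where "\<psi> = f \<circ> \<phi> \<circ> g"
    have "\<psi> \<in> hom G2 G2"
    proof (rule homI)
      fix x assume "x \<in> carrier G2"
      then have "g x \<in> carrier G1" using ghom by (metis hom_cl)
      then have "\<phi> (g x) \<in> carrier G1" using phi(1) by (metis hom_cl)
      then show "\<psi> x \<in> carrier G2" unfolding \<psi>_def using fhom by (metis hom_cl comp_apply)
    next
      fix x y assume xy: "x \<in> carrier G2" "y \<in> carrier G2"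
      have g1: "g x \<in> carrier G1" "g y \<in> carrier G1" using ghom xy by (metis hom_cl)+
      have p1: "\<phi> (g x) \<in> carrier G1" "\<phi> (g y) \<in> carrier G1" using phi(1) g1 by (metis hom_cl)+
      have "g (x \<otimes>\<^bsub>G2\<^esub> y) = g x \<otimes>\<^bsub>G1\<^esub> g y" using ghom xy by (rule hom_mult)
      moreover have "\<phi> (g x \<otimes>\<^bsub>G1\<^esub> g y) = \<phi> (g x) \<otimes>\<^bsub>G1\<^esub> \<phi> (g y)" using phi(1) g1 by (rule hom_mult)
      moreover have "f (\<phi> (g x) \<otimes>\<^bsub>G1\<^esub> \<phi> (g y)) = f (\<phi> (g x)) \<otimes>\<^bsub>G2\<^esub> f (\<phi> (g y))" using fhom p1 by (rule hom_mult)
      ultimately show "\<psi> (x \<otimes>\<^bsub>G2\<^esub> y) = \<psi> x \<otimes>\<^bsub>G2\<^esub> \<psi> y" unfolding \<psi>_def by simp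
    qed
    moreover have "continuous_map T2 T2 \<psi>" unfolding \<psi>_def
      
      by (rule continuous_map_compose[OF gc continuous_map_compose[OF phi(2) fc]])
    moreover have "{x \<in> carrier G2. \<psi> x \<in> H2} = K"
    proof (rule equalityI; rule subsetI)
      fix x assume x: "x \<in> {x \<in> carrier G2. \<psi> x \<in> H2}"
      then have xc: "x \<in> carrier G2" by auto
      have gx: "g x \<in> carrier G1" using ghom xc by (metis hom_cl)
      have pgx: "\<phi> (g x) \<in> carrier G1" using phi(1) gx by (metis hom_cl)
      obtain h where h: "h \<in> H1" "f (\<phi> (g x)) = f h" using x unfolding \<psi>_def H2_def by auto
      have "\<phi> (g x) = h" using finj h pgx H1c by (meson inj_onD subsetD)
      then have "g x \<in> g ` K" using phi(3) gx h(1) by blast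
      then obtain k where "k \<in> K" "g x = g k" by auto
      then show "x \<in> K" using ginj xc Kc by (metis inj_onD subsetD)
    next
      fix x assume xK: "x \<in> K"
      then have xc: "x \<in> carrier G2" using Kc by auto
      have "g x \<in> {x \<in> carrier G1. \<phi> x \<in> H1}" using phi(3) xK by blast
      then have "\<phi> (g x) \<in> H1" by auto
      then show "x \<in> {x \<in> carrier G2. \<psi> x \<in> H2}" using xc unfolding \<psi>_def H2_def by auto
    qed
    ultimately show "\<exists>\<psi>. \<psi> \<in> hom G2 G2 \<and> continuous_map T2 T2 \<psi> \<and>
             {x \<in> carrier G2. \<psi> x \<in> H2} = K" by blast
  qed
  ultimately show ?thesis unfolding universal_Ksigma_subgroup_def by blast
qed

end
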